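(* Let $\eta^0\in\{-1,0,1\}^{\mathbb{Z}}$ be an initial configuration and let $s_1<s_2$ be separators of $\eta^0$ such that no separator lies strictly between them. Let $I=\{s_1,\dots,s_2\}$ and consider the golf process $\eta[I]$ restricted to $I$. Then $\eta[I]$ is valid, and at time $1$ both $s_1$ and $s_2$ are free holes of $\eta[I]$.
   Context: State $1$ = ball, $-1$ = hole, $0$ = neutral. A vertex $v$ is a separator for $\eta^0$ if $\eta^0_v=-1$, $\sum_{j=k}^{v-1}\eta^0_j\le0$ for all $k<v$, and $\sum_{j=v+1}^{k}\eta^0_j\le0$ for all $k>v$. The golf process restricted to $I$ is the golf process on the path graph $I$ with initial configuration $(\eta^0_i)_{i\in I}$, clocks $(C(i))_{i\in I}$ i.i.d. uniform on $[0,1]$, and a transition matrix equal to that of the random walk with steps $+1$ w.p. $p$ and $-1$ w.p. $1-p$ at interior points of $I$ and reflected at the endpoints: at time $C(v)$, a ball at $v$ performs this walk from $v$, stopped at the first hole that is free at that time, which it fills (both vertices becoming neutral); if it never finds one the process is frozen. The process is valid if it is a.s. well-defined and not frozen at time $1$, measurable, and a.s. càdlàg as a function $[0,1]\to\{-1,0,1,\ast\}^I$. *)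

theory Defs
  imports "HOL-Probability.Probability"
begin

text \<open>Separator of an initial configuration eta0 (values -1 hole, 0 neutral, 1 ball).\<close>
definition separator :: "(int \<Rightarrow> int) \<Rightarrow> int \<Rightarrow> bool" where
  "separator \<eta> v \<longleftrightarrow> \<eta> v = -1
     \<and> (\<forall>k<v. (\<Sum>j\<in>{k..v-1}. \<eta> j) \<le> 0)
     \<and> (\<forall>k>v. (\<Sum>j\<in>{v+1..k}. \<eta> j) \<le> 0)"

definition walk_step :: "int \<Rightarrow> int \<Rightarrow> bool \<Rightarrow> int \<Rightarrow> int" where
  "walk_step a b up x =
     (if x = a then a + 1 else if x = b then b - 1 else if up then x + 1 else x - 1)"

fun walk :: "int \<Rightarrow> int \<Rightarrow> (nat \<Rightarrow> bool) \<Rightarrow> int \<Rightarrow> nat \<Rightarrow> int" where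
  "walk a b \<xi> v 0 = v"
| "walk a b \<xi> v (Suc n) = walk_step a b (\<xi> n) (walk a b \<xi> v n)"

definition ball_move :: "int \<Rightarrow> int \<Rightarrow> (nat \<Rightarrow> bool) \<Rightarrow> int \<Rightarrow> (int \<Rightarrow> int) \<Rightarrow> (int \<Rightarrow> int) option" where
  "ball_move a b \<xi> v \<eta> =
     (if \<exists>n. \<eta> (walk a b \<xi> v n) = -1
      then (let h = walk a b \<xi> v (LEAST n. \<eta> (walk a b \<xi> v n) = -1)
            in Some (\<eta>(v := 0, h := 0)))
      else None)"

text \<open>Golf process restricted to I = {a..b}; omega = (clocks, step sequences of the walks
  started from each vertex). Value None encodes the state * (frozen / not well-defined,
  e.g. tied clocks).\<close>
definition golf_restricted ::
  "(int \<Rightarrow> int) \<Rightarrow> int \<Rightarrow> int \<Rightarrow> (int \<Rightarrow> real) \<times> (int \<Rightarrow> nat \<Rightarrow> bool) \<Rightarrow> real \<Rightarrow> (int \<Rightarrow> int) option" where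
  "golf_restricted \<eta>0 a b \<omega> t =
     (let C = fst \<omega>; W = snd \<omega>; B = {v \<in> {a..b}. \<eta>0 v = 1} in
      if inj_on C B
      then fold (\<lambda>v acc. Option.bind acc (ball_move a b (W v) v))
                (sort_key C (sorted_list_of_set {v \<in> B. C v \<le> t}))
                (Some (\<lambda>i. if i \<in> {a..b} then \<eta>0 i else 0))
      else None)"

definition golf_measure :: "int \<Rightarrow> int \<Rightarrow> real \<Rightarrow> ((int \<Rightarrow> real) \<times> (int \<Rightarrow> nat \<Rightarrow> bool)) measure" where
  "golf_measure a b p =
     (PiM {a..b} (\<lambda>_. uniform_measure lborel {0..1::real}))
     \<Otimes>\<^sub>M (PiM {a..b} (\<lambda>_. PiM (UNIV :: nat set) (\<lambda>_. measure_pmf (bernoulli_pmf p))))"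

definition cadlag_discrete :: "(real \<Rightarrow> 'a) \<Rightarrow> bool" where
  "cadlag_discrete f \<longleftrightarrow>
     (\<forall>t\<in>{0..<1}. \<exists>e>0. \<forall>s. t \<le> s \<and> s < t + e \<and> s \<le> 1 \<longrightarrow> f s = f t)
   \<and> (\<forall>t\<in>{0<..1}. \<exists>e>0. \<exists>y. \<forall>s. t - e < s \<and> s < t \<and> 0 \<le> s \<longrightarrow> f s = y)"

definition golf_valid :: "(int \<Rightarrow> int) \<Rightarrow> int \<Rightarrow> int \<Rightarrow> real \<Rightarrow> bool" where
  "golf_valid \<eta>0 a b p \<longleftrightarrow>
     (AE \<omega> in golf_measure a b p. \<forall>t\<in>{0..1}. golf_restricted \<eta>0 a b \<omega> t \<noteq> None)
   \<and> (\<forall>t\<in>{0..1}. \<forall>i\<in>{a..b}.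
        (\<lambda>\<omega>. map_option (\<lambda>\<eta>. \<eta> i) (golf_restricted \<eta>0 a b \<omega> t))
          \<in> measurable (golf_measure a b p) (count_space UNIV))
   \<and> (AE \<omega> in golf_measure a b p. cadlag_discrete (golf_restricted \<eta>0 a b \<omega>))"

end

theory Submission
  imports Defs
begin


lemma sum_split_ivl:
  fixes f :: "int \<Rightarrow> int"
  assumes "l \<le> m" "m \<le> r + 1"
  shows "sum f {l..r} = sum f {l..m-1} + sum f {m..r}"
proof -
  have "{l..r} = {l..m-1} \<union> {m..r}" using assms by auto
  moreover have "{l..m-1} \<inter> {m..r} = {}" by auto
  ultimately show ?thesis by (simp add: sum.union_disjoint)
qed

lemma sum_upd1:
  fixes g :: "int \<Rightarrow> int"
  assumes "finite A"
  shows "sum (g(x:=0)) A = sum g A - (if x \<in> A then g x else 0)"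
proof (cases "x \<in> A")
  case True
  have e: "sum (g(x:=0)) (A - {x}) = sum g (A - {x})" by (rule sum.cong) auto
  have "sum (g(x:=0)) A = (g(x:=0)) x + sum (g(x:=0)) (A - {x})"
    by (rule sum.remove[OF assms True])
  moreover have "sum g A = g x + sum g (A - {x})"
    by (rule sum.remove[OF assms True])
  ultimately show ?thesis using e True by simp
next
  case False
  then have "sum (g(x:=0)) A = sum g A" by (intro sum.cong) auto
  then show ?thesis using False by simp
qed

lemma sum_upd2:
  fixes y :: "int \<Rightarrow> int"
  assumes "finite A" "u \<noteq> h"
  shows "sum (y(u:=0, h:=0)) A = sum y A - (if u \<in> A then y u else 0) - (if h \<in> A then y h else 0)"
  using sum_upd1[OF assms(1), of "y(u:=0)" h] sum_upd1[OF assms(1), of y u] assms(2)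
  by (simp del: fun_upd_apply) (simp add: assms(2)[symmetric])
lemma walk_range:
  assumes "a < b" "x \<in> {a..b}"
  shows "walk a b \<xi> x n \<in> {a..b}"
  using assms by (induction n) (auto simp: walk_step_def)

lemma walk_adj:
  assumes "a < b" "x \<in> {a..b}"
  shows "\<bar>walk a b \<xi> x (Suc n) - walk a b \<xi> x n\<bar> = 1"
  using walk_range[OF assms, of \<xi> n] assms by (auto simp: walk_step_def)

lemma ivt_up:
  fixes f :: "nat \<Rightarrow> int"
  assumes "\<And>n. \<bar>f (Suc n) - f n\<bar> \<le> 1" "f 0 \<le> j" "j \<le> f n"
  shows "\<exists>m\<le>n. f m = j"
  using assms(3)
proof (induction n)
  case 0 then show ?case using assms(2) by auto
next
  case (Suc n)
  show ?case
  proof (cases "j \<le> f n")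
    case True then show ?thesis using Suc.IH by (meson le_Suc_eq)
  next
    case False
    then have "j = f (Suc n)" using Suc.prems assms(1)[of n] by auto
    then show ?thesis by auto
  qed
qed

lemma ivt_down:
  fixes f :: "nat \<Rightarrow> int"
  assumes "\<And>n. \<bar>f (Suc n) - f n\<bar> \<le> 1" "j \<le> f 0" "f n \<le> j"
  shows "\<exists>m\<le>n. f m = j"
proof -
  have "\<exists>m\<le>n. - f m = - j"
    by (rule ivt_up[where f="\<lambda>n. - f n"]) (use assms in \<open>auto simp: abs_minus_commute\<close>)
  then show ?thesis by auto
qed

definition Inv :: "int \<Rightarrow> int \<Rightarrow> (int \<Rightarrow> int) \<Rightarrow> bool" where
  "Inv a b y \<longleftrightarrow> y a = -1 \<and> y b = -1 \<and> (\<forall>i. -1 \<le> y i)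
     \<and> (\<forall>k. k < b \<longrightarrow> sum y {a+1..k} \<le> 0) \<and> (\<forall>k. a < k \<longrightarrow> sum y {k..b-1} \<le> 0)"

lemma move_step:
  assumes ab: "a < b" and I: "Inv a b y" and yu: "y u = 1" and u: "u \<in> {a..b}"
    and reach: "\<exists>n. walk a b \<xi> u n \<in> {a, b}"
  shows "\<exists>h. ball_move a b \<xi> u y = Some (y(u:=0, h:=0)) \<and> Inv a b (y(u:=0, h:=0)) \<and> y h = -1"
proof -
  let ?w = "walk a b \<xi> u"
  from I have ya: "y a = -1" and yb: "y b = -1" and ge: "\<And>i. -1 \<le> y i"
    and P: "\<And>k. k < b \<Longrightarrow> sum y {a+1..k} \<le> 0" and S: "\<And>k. a < k \<Longrightarrow> sum y {k..b-1} \<le> 0"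
    unfolding Inv_def by auto
  have ex: "\<exists>n. y (?w n) = -1"
  proof -
    obtain n where "?w n \<in> {a,b}" using reach by blast
    then have "y (?w n) = -1" using ya yb by auto
    then show ?thesis by blast
  qed
  define n0 where "n0 = (LEAST n. y (?w n) = -1)"
  define h where "h = ?w n0"
  have yh: "y h = -1" unfolding h_def n0_def using LeastI_ex[OF ex] .
  have before: "\<And>m. m < n0 \<Longrightarrow> y (?w m) \<noteq> -1" unfolding n0_def using not_less_Least by blast
  have bm: "ball_move a b \<xi> u y = Some (y(u:=0, h:=0))"
    unfolding ball_move_def h_def n0_def using ex by (simp add: Let_def)
  have hu: "h \<noteq> u" using yh yu by auto
  have uab: "a < u" "u < b"
  proof -
    have "u \<noteq> a" "u \<noteq> b" using yu ya yb by auto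
    then show "a < u" "u < b" using u by auto
  qed
  have hr: "h \<in> {a..b}" unfolding h_def using walk_range[OF ab u] .
  have adj: "\<And>n. \<bar>?w (Suc n) - ?w n\<bar> \<le> 1" using walk_adj[OF ab u] by simp
  have w0: "?w 0 = u" by simp
  have ysum: "sum (y(u:=0, h:=0)) A = sum y A - (if u \<in> A then 1 else 0) + (if h \<in> A then 1 else 0)"
    if "finite A" for A by (subst sum_upd2[OF that hu[symmetric], of y]) (simp add: yu yh)
  have nonneg_between: "0 \<le> y j" if "u < j" "j < h" for j
  proof -
    have "\<exists>m\<le>n0. ?w m = j" by (rule ivt_up[where f="?w", OF adj]) (use that w0 h_def in auto)
    then obtain m where m: "m \<le> n0" "?w m = j" by blast
    have "m \<noteq> n0" using m that h_def by auto
    then have "y j \<noteq> -1" using before m by auto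
    then show ?thesis using ge[of j] by auto
  qed
  have nonneg_between2: "0 \<le> y j" if "h < j" "j < u" for j
  proof -
    have "\<exists>m\<le>n0. ?w m = j" by (rule ivt_down[where f="?w", OF adj]) (use that w0 h_def in auto)
    then obtain m where m: "m \<le> n0" "?w m = j" by blast
    have "m \<noteq> n0" using m that h_def by auto
    then have "y j \<noteq> -1" using before m by auto
    then show ?thesis using ge[of j] by auto
  qed
  have Inv': "Inv a b (y(u:=0, h:=0))"
  proof (cases "u < h")
    case True
    have hb: "h < b"
    proof (rule ccontr)
      assume "\<not> h < b"
      then have hb: "h = b" using hr by auto
      have "sum y {u..b-1} = sum y {u..u} + sum y {u+1..b-1}"
        using sum_split_ivl[of u "u+1" "b-1" y] uab by simp
      moreover have "sum y {u+1..b-1} \<ge> 0"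
        by (rule sum_nonneg) (use nonneg_between hb in auto)
      ultimately have "sum y {u..b-1} \<ge> 1" using yu by simp
      then show False using S[of u] uab by simp
    qed
    show ?thesis unfolding Inv_def
    proof (intro conjI allI impI)
      show "(y(u := 0, h := 0)) a = -1" "(y(u := 0, h := 0)) b = -1"
        using ya yb uab True hb by auto
      show "-1 \<le> (y(u := 0, h := 0)) i" for i using ge[of i] by auto
      show "sum (y(u := 0, h := 0)) {a + 1..k} \<le> 0" if "k < b" for k
        using ysum[of "{a+1..k}"] P[OF that] True uab by auto
      show "sum (y(u := 0, h := 0)) {k..b - 1} \<le> 0" if "a < k" for k
      proof (cases "u < k \<and> k \<le> h")
        case True
        have "sum y {u..b-1} = sum y {u..k-1} + sum y {k..b-1}"
          using sum_split_ivl[of u k "b-1" y] True hb by simp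
        moreover have "sum y {u..k-1} = sum y {u..u} + sum y {u+1..k-1}"
          using sum_split_ivl[of u "u+1" "k-1" y] True by simp
        moreover have "sum y {u+1..k-1} \<ge> 0"
          by (rule sum_nonneg) (use nonneg_between True in auto)
        ultimately have "sum y {k..b-1} \<le> -1" using yu S[of u] uab by simp
        then show ?thesis using ysum[of "{k..b-1}"] True hb by auto
      next
        case False
        then show ?thesis using ysum[of "{k..b-1}"] S[OF that] \<open>u < h\<close> hb by auto
      qed
    qed
  next
    case False
    then have True: "h < u" using hu by auto
    have ha: "a < h"
    proof (rule ccontr)
      assume "\<not> a < h"
      then have ha: "h = a" using hr by auto
      have "sum y {a+1..u} = sum y {a+1..u-1} + sum y {u..u}"
        using sum_split_ivl[of "a+1" u u y] uab by simp
      moreover have "sum y {a+1..u-1} \<ge> 0"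
        by (rule sum_nonneg) (use nonneg_between2 ha in auto)
      ultimately have "sum y {a+1..u} \<ge> 1" using yu by simp
      then show False using P[of u] uab by simp
    qed
    show ?thesis unfolding Inv_def
    proof (intro conjI allI impI)
      show "(y(u := 0, h := 0)) a = -1" "(y(u := 0, h := 0)) b = -1"
        using ya yb uab True ha by auto
      show "-1 \<le> (y(u := 0, h := 0)) i" for i using ge[of i] by auto
      show "sum (y(u := 0, h := 0)) {k..b - 1} \<le> 0" if "a < k" for k
        using ysum[of "{k..b-1}"] S[OF that] True uab by auto
      show "sum (y(u := 0, h := 0)) {a+1..k} \<le> 0" if "k < b" for k
      proof (cases "h \<le> k \<and> k < u")
        case True
        have "sum y {a+1..u} = sum y {a+1..k} + sum y {k+1..u}"
          using sum_split_ivl[of "a+1" "k+1" u y] True ha by simp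
        moreover have "sum y {k+1..u} = sum y {k+1..u-1} + sum y {u..u}"
          using sum_split_ivl[of "k+1" u u y] True by simp
        moreover have "sum y {k+1..u-1} \<ge> 0"
          by (rule sum_nonneg) (use nonneg_between2 True in auto)
        ultimately have "sum y {a+1..k} \<le> -1" using yu P[of u] uab by simp
        then show ?thesis using ysum[of "{a+1..k}"] True ha by auto
      next
        case False
        then show ?thesis using ysum[of "{a+1..k}"] P[OF that] \<open>h < u\<close> ha by auto
      qed
    qed
  qed
  show ?thesis using bm Inv' yh by blast
qed



lemma reach_up:
  assumes ab: "a < b" and x: "x \<in> {a..b}" and run: "\<forall>j<N. \<xi> (m + j)" and N: "b - a \<le> int N"
  shows "\<exists>n. walk a b \<xi> x n = b"
proof (rule ccontr)
  assume nb: "\<not> ?thesis"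
  have "walk a b \<xi> x (m + i) \<ge> walk a b \<xi> x m + int i" if "i \<le> N" for i
    using that
  proof (induction i)
    case 0 then show ?case by simp
  next
    case (Suc i)
    have r: "walk a b \<xi> x (m + i) \<in> {a..b}" using walk_range[OF ab x] .
    have "walk a b \<xi> x (m + i) \<noteq> b" using nb by blast
    moreover have "\<xi> (m + i)" using run Suc.prems by auto
    ultimately have "walk a b \<xi> x (m + Suc i) = walk a b \<xi> x (m + i) + 1"
      using r by (auto simp: walk_step_def)
    then show ?case using Suc by simp
  qed
  from this[of N] have "walk a b \<xi> x (m + N) \<ge> b" using walk_range[OF ab x, of \<xi> m] N by simp
  moreover have "walk a b \<xi> x (m + N) \<le> b" using walk_range[OF ab x] by simp
  ultimately show False using nb by (metis order_antisym)
qed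

lemma reach_down:
  assumes ab: "a < b" and x: "x \<in> {a..b}" and run: "\<forall>j<N. \<not> \<xi> (m + j)" and N: "b - a \<le> int N"
  shows "\<exists>n. walk a b \<xi> x n = a"
proof (rule ccontr)
  assume nb: "\<not> ?thesis"
  have "walk a b \<xi> x (m + i) \<le> walk a b \<xi> x m - int i" if "i \<le> N" for i
    using that
  proof (induction i)
    case 0 then show ?case by simp
  next
    case (Suc i)
    have r: "walk a b \<xi> x (m + i) \<in> {a..b}" using walk_range[OF ab x] .
    have "walk a b \<xi> x (m + i) \<noteq> a" using nb by blast
    moreover have "\<not> \<xi> (m + i)" using run Suc.prems by auto
    ultimately have "walk a b \<xi> x (m + Suc i) = walk a b \<xi> x (m + i) - 1"
      using r by (auto simp: walk_step_def)
    then show ?case using Suc by simp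
  qed
  from this[of N] have "walk a b \<xi> x (m + N) \<le> a" using walk_range[OF ab x, of \<xi> m] N by simp
  moreover have "walk a b \<xi> x (m + N) \<ge> a" using walk_range[OF ab x] by simp
  ultimately show False using nb by (metis order_antisym)
qed

definition stepF :: "int \<Rightarrow> int \<Rightarrow> (int \<Rightarrow> nat \<Rightarrow> bool) \<Rightarrow> int \<Rightarrow> (int \<Rightarrow> int) option \<Rightarrow> (int \<Rightarrow> int) option" where
  "stepF a b W = (\<lambda>v acc. Option.bind acc (ball_move a b (W v) v))"

lemma fold_inv:
  assumes ab: "a < b"
  shows "distinct L \<Longrightarrow> Inv a b y \<Longrightarrow> (\<forall>v\<in>set L. y v = 1 \<and> v \<in> {a..b} \<and> (\<exists>n. walk a b (W v) v n \<in> {a, b}))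
    \<Longrightarrow> \<exists>y'. fold (stepF a b W) L (Some y) = Some y' \<and> Inv a b y'"
proof (induction L arbitrary: y)
  case Nil then show ?case by simp
next
  case (Cons v L)
  obtain h where h: "ball_move a b (W v) v y = Some (y(v:=0, h:=0))" "Inv a b (y(v:=0, h:=0))" "y h = -1"
    using move_step[OF ab Cons.prems(2), of v "W v"] Cons.prems by auto
  have "\<exists>y'. fold (stepF a b W) L (Some (y(v:=0, h:=0))) = Some y' \<and> Inv a b y'"
  proof (rule Cons.IH)
    show "distinct L" using Cons.prems by simp
    show "Inv a b (y(v:=0, h:=0))" by fact
    show "\<forall>w\<in>set L. (y(v := 0, h := 0)) w = 1 \<and> w \<in> {a..b} \<and> (\<exists>n. walk a b (W w) w n \<in> {a, b})"
      using Cons.prems h(3) by auto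
  qed
  then show ?case using h(1) by (simp add: stepF_def)
qed



definition Gf :: "(int \<Rightarrow> int) \<Rightarrow> int \<Rightarrow> int \<Rightarrow> (int \<Rightarrow> real) \<times> (int \<Rightarrow> nat \<Rightarrow> bool) \<Rightarrow> int set \<Rightarrow> (int \<Rightarrow> int) option" where
  "Gf \<eta>0 a b \<omega> X = (if inj_on (fst \<omega>) {v \<in> {a..b}. \<eta>0 v = 1}
      then fold (stepF a b (snd \<omega>)) (sort_key (fst \<omega>) (sorted_list_of_set X))
                (Some (\<lambda>i. if i \<in> {a..b} then \<eta>0 i else 0))
      else None)"

lemma golf_Gf: "golf_restricted \<eta>0 a b \<omega> t = Gf \<eta>0 a b \<omega> {v \<in> {v \<in> {a..b}. \<eta>0 v = 1}. fst \<omega> v \<le> t}"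
  unfolding golf_restricted_def Gf_def Let_def stepF_def by simp

lemma right_const:
  fixes C :: "int \<Rightarrow> real"
  assumes "finite B"
  shows "\<exists>e>0. \<forall>s. t \<le> s \<and> s < t + e \<longrightarrow> {v\<in>B. C v \<le> s} = {v\<in>B. C v \<le> t}"
proof -
  define e where "e = Min (insert 1 ((\<lambda>v. C v - t) ` {v\<in>B. C v > t}))"
  have fin: "finite (insert 1 ((\<lambda>v. C v - t) ` {v\<in>B. C v > t}))" using assms by simp
  have "e > 0" unfolding e_def using fin by (subst Min_gr_iff) auto
  moreover have "\<forall>s. t \<le> s \<and> s < t + e \<longrightarrow> {v\<in>B. C v \<le> s} = {v\<in>B. C v \<le> t}"
  proof (intro allI impI)
    fix s assume s: "t \<le> s \<and> s < t + e"
    have "C v \<le> t" if "v \<in> B" "C v \<le> s" for v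
    proof (rule ccontr)
      assume "\<not> C v \<le> t"
      then have "e \<le> C v - t" unfolding e_def using fin that by (intro Min_le) auto
      then show False using s that by simp
    qed
    then show "{v\<in>B. C v \<le> s} = {v\<in>B. C v \<le> t}" using s by force
  qed
  ultimately show ?thesis by blast
qed

lemma left_const:
  fixes C :: "int \<Rightarrow> real"
  assumes "finite B"
  shows "\<exists>e>0. \<forall>s. t - e < s \<and> s < t \<longrightarrow> {v\<in>B. C v \<le> s} = {v\<in>B. C v < t}"
proof -
  define e where "e = Min (insert 1 ((\<lambda>v. t - C v) ` {v\<in>B. C v < t}))"
  have fin: "finite (insert 1 ((\<lambda>v. t - C v) ` {v\<in>B. C v < t}))" using assms by simp
  have "e > 0" unfolding e_def using fin by (subst Min_gr_iff) auto
  moreover have "\<forall>s. t - e < s \<and> s < t \<longrightarrow> {v\<in>B. C v \<le> s} = {v\<in>B. C v < t}"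
  proof (intro allI impI)
    fix s assume s: "t - e < s \<and> s < t"
    have "C v \<le> s" if "v \<in> B" "C v < t" for v
    proof (rule ccontr)
      assume "\<not> C v \<le> s"
      have "e \<le> t - C v" unfolding e_def using fin that by (intro Min_le) auto
      then show False using s that \<open>\<not> C v \<le> s\<close> by simp
    qed
    then show "{v\<in>B. C v \<le> s} = {v\<in>B. C v < t}" using s by force
  qed
  ultimately show ?thesis by blast
qed

lemma golf_cadlag: "cadlag_discrete (golf_restricted \<eta>0 a b \<omega>)"
proof -
  let ?B = "{v \<in> {a..b}. \<eta>0 v = 1}"
  have fin: "finite ?B" by (rule finite_subset[of _ "{a..b}"]) auto
  let ?f = "golf_restricted \<eta>0 a b \<omega>"
  have R: "\<exists>e>0. \<forall>s. t \<le> s \<and> s < t + e \<and> s \<le> 1 \<longrightarrow> ?f s = ?f t" for t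
  proof -
    obtain e where e: "e > 0" "\<And>s. t \<le> s \<and> s < t + e \<Longrightarrow> {v\<in>?B. fst \<omega> v \<le> s} = {v\<in>?B. fst \<omega> v \<le> t}"
      using right_const[OF fin, of t "fst \<omega>"] by blast
    have "\<forall>s. t \<le> s \<and> s < t + e \<and> s \<le> 1 \<longrightarrow> ?f s = ?f t"
    proof (intro allI impI)
      fix s assume "t \<le> s \<and> s < t + e \<and> s \<le> 1"
      then have "{v\<in>?B. fst \<omega> v \<le> s} = {v\<in>?B. fst \<omega> v \<le> t}" using e(2) by blast
      then show "?f s = ?f t" unfolding golf_Gf by (rule arg_cong)
    qed
    then show ?thesis using e(1) by blast
  qed
  have L: "\<exists>e>0. \<exists>y. \<forall>s. t - e < s \<and> s < t \<and> 0 \<le> s \<longrightarrow> ?f s = y" for t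
  proof -
    obtain e where e: "e > 0" "\<And>s. t - e < s \<and> s < t \<Longrightarrow> {v\<in>?B. fst \<omega> v \<le> s} = {v\<in>?B. fst \<omega> v < t}"
      using left_const[OF fin, of t "fst \<omega>"] by blast
    have "\<forall>s. t - e < s \<and> s < t \<and> 0 \<le> s \<longrightarrow> ?f s = Gf \<eta>0 a b \<omega> {v\<in>?B. fst \<omega> v < t}"
    proof (intro allI impI)
      fix s assume "t - e < s \<and> s < t \<and> 0 \<le> s"
      then have "{v\<in>?B. fst \<omega> v \<le> s} = {v\<in>?B. fst \<omega> v < t}" using e(2) by blast
      then show "?f s = Gf \<eta>0 a b \<omega> {v\<in>?B. fst \<omega> v < t}" unfolding golf_Gf by (rule arg_cong)
    qed
    then show ?thesis using e(1) by blast
  qed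
  show ?thesis unfolding cadlag_discrete_def using R L by blast
qed
lemma Inv_init:
  assumes vals: "\<forall>i. \<eta>0 i \<in> {-1, 0, 1}" and s1: "separator \<eta>0 a" and s2: "separator \<eta>0 b" and ab: "a < b"
  shows "Inv a b (\<lambda>i. if i \<in> {a..b} then \<eta>0 i else 0)"
  unfolding Inv_def
proof (intro conjI allI impI)
  let ?y = "\<lambda>i. if i \<in> {a..b} then \<eta>0 i else 0"
  show "?y a = -1" "?y b = -1" using s1 s2 ab by (auto simp: separator_def)
  show "-1 \<le> ?y i" for i using vals[rule_format, of i] by auto
  have S1: "\<forall>k>a. sum \<eta>0 {a+1..k} \<le> 0" using s1 unfolding separator_def by blast
  have S2: "\<forall>k<b. sum \<eta>0 {k..b-1} \<le> 0" using s2 unfolding separator_def by blast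
  show "sum ?y {a+1..k} \<le> 0" if "k < b" for k
  proof (cases "a < k")
    case True
    have "sum ?y {a+1..k} = sum \<eta>0 {a+1..k}" using that by (intro sum.cong) auto
    then show ?thesis using S1 True by metis
  next
    case False
    then have "{a+1..k} = {}" by auto
    then show ?thesis by (simp only: sum.empty)
  qed
  show "sum ?y {k..b-1} \<le> 0" if "a < k" for k
  proof (cases "k < b")
    case True
    have "sum ?y {k..b-1} = sum \<eta>0 {k..b-1}" using that by (intro sum.cong) auto
    then show ?thesis using S2 True by metis
  next
    case False
    then have "{k..b-1} = {}" by auto
    then show ?thesis by (simp only: sum.empty)
  qed
qed

definition goodW :: "int \<Rightarrow> int \<Rightarrow> bool \<Rightarrow> (nat \<Rightarrow> bool) \<Rightarrow> bool" where
  "goodW a b c \<xi> \<longleftrightarrow> (\<exists>m. \<forall>j<nat (b - a). \<xi> (m + j) = c)"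

lemma goodW_reach:
  assumes "a < b" "x \<in> {a..b}" "goodW a b c \<xi>"
  shows "\<exists>n. walk a b \<xi> x n \<in> {a, b}"
proof -
  obtain m where m: "\<forall>j<nat (b - a). \<xi> (m + j) = c" using assms(3) unfolding goodW_def by blast
  have N: "b - a \<le> int (nat (b - a))" by simp
  show ?thesis
  proof (cases c)
    case True
    then obtain n where "walk a b \<xi> x n = b" using reach_up[OF assms(1,2) _ N, of \<xi> m] m by auto
    then show ?thesis by blast
  next
    case False
    then obtain n where "walk a b \<xi> x n = a" using reach_down[OF assms(1,2) _ N, of \<xi> m] m by auto
    then show ?thesis by blast
  qed
qed

lemma good_golf:
  assumes vals: "\<forall>i. \<eta>0 i \<in> {-1, 0, 1}" and s1: "separator \<eta>0 a" and s2: "separator \<eta>0 b" and ab: "a < b"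
    and inj: "inj_on (fst \<omega>) {v \<in> {a..b}. \<eta>0 v = 1}"
    and gw: "\<forall>v \<in> {v \<in> {a..b}. \<eta>0 v = 1}. goodW a b c (snd \<omega> v)"
  shows "\<exists>y. golf_restricted \<eta>0 a b \<omega> t = Some y \<and> Inv a b y"
proof -
  let ?B = "{v \<in> {a..b}. \<eta>0 v = 1}"
  let ?X = "{v \<in> ?B. fst \<omega> v \<le> t}"
  let ?L = "sort_key (fst \<omega>) (sorted_list_of_set ?X)"
  have fin: "finite ?X" by (rule finite_subset[of _ "{a..b}"]) auto
  have dist: "distinct ?L" using fin by (simp add: distinct_sort)
  have setL: "set ?L = ?X" using fin by simp
  have "\<exists>y'. fold (stepF a b (snd \<omega>)) ?L (Some (\<lambda>i. if i \<in> {a..b} then \<eta>0 i else 0)) = Some y' \<and> Inv a b y'"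
  proof (rule fold_inv[OF ab dist Inv_init[OF vals s1 s2 ab]])
    show "\<forall>v\<in>set ?L. (if v \<in> {a..b} then \<eta>0 v else 0) = 1 \<and> v \<in> {a..b} \<and> (\<exists>n. walk a b (snd \<omega> v) v n \<in> {a, b})"
      using setL gw goodW_reach[OF ab] by auto
  qed
  moreover have "golf_restricted \<eta>0 a b \<omega> t = fold (stepF a b (snd \<omega>)) ?L (Some (\<lambda>i. if i \<in> {a..b} then \<eta>0 i else 0))"
    unfolding golf_Gf Gf_def if_P[OF inj] by (rule refl)
  ultimately show ?thesis by metis
qed



lemma space_golf: "\<omega> \<in> space (golf_measure a b p) \<Longrightarrow> v \<notin> {a..b} \<Longrightarrow> snd \<omega> v = undefined \<and> fst \<omega> v = undefined"
  unfolding golf_measure_def by (auto simp: space_pair_measure space_PiM PiE_def extensional_def)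

lemma meas_W[measurable]: "(\<lambda>\<omega>. snd \<omega> v n) \<in> measurable (golf_measure a b p) (count_space UNIV)"
proof (cases "v \<in> {a..b}")
  case True
  have 1: "(\<lambda>\<omega>. snd \<omega> v) \<in> measurable (golf_measure a b p) (PiM UNIV (\<lambda>_. measure_pmf (bernoulli_pmf p)))"
    using True unfolding golf_measure_def by measurable
  have 2: "(\<lambda>\<xi>. \<xi> n) \<in> measurable (PiM UNIV (\<lambda>_. measure_pmf (bernoulli_pmf p))) (measure_pmf (bernoulli_pmf p))"
    by (rule measurable_component_singleton) simp
  have 3: "(\<lambda>\<xi>. \<xi> n) \<in> measurable (PiM UNIV (\<lambda>_. measure_pmf (bernoulli_pmf p))) (count_space UNIV)"
    using 2 measurable_cong_sets[OF refl sets_measure_pmf_count_space] by blast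
  show ?thesis using measurable_compose[OF 1 3] by simp
next
  case False
  show ?thesis
    by (rule measurable_cong[where g="\<lambda>_. undefined n", THEN iffD2]) (use space_golf False in auto)
qed

lemma meas_C[measurable]: "(\<lambda>\<omega>. fst \<omega> v) \<in> borel_measurable (golf_measure a b p)"
proof (cases "v \<in> {a..b}")
  case True
  then show ?thesis unfolding golf_measure_def by measurable
next
  case False
  show ?thesis
    by (rule measurable_cong[where g="\<lambda>_. undefined", THEN iffD2]) (use space_golf False in auto)
qed



lemma mcc:
  fixes g :: "'a \<Rightarrow> 'c::countable"
  assumes "g \<in> measurable M (count_space UNIV)" "\<And>i. (\<lambda>x. f i x) \<in> measurable M N"
  shows "(\<lambda>x. f (g x) x) \<in> measurable M N"
  by (rule measurable_compose_countable'[where I=UNIV]) (use assms in auto)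

lemma meas_walk[measurable]:
  "(\<lambda>\<omega>. walk a' b' (snd \<omega> v) x n) \<in> measurable (golf_measure a b p) (count_space UNIV)"
proof (induction n)
  case 0 then show ?case by simp
next
  case (Suc n)
  have "(\<lambda>\<omega>. walk_step a' b' (snd \<omega> v n) (walk a' b' (snd \<omega> v) x n)) \<in> measurable (golf_measure a b p) (count_space UNIV)"
  proof (rule mcc[where g="\<lambda>\<omega>. walk a' b' (snd \<omega> v) x n" and f="\<lambda>i \<omega>. walk_step a' b' (snd \<omega> v n) i"])
    show "(\<lambda>\<omega>. walk a' b' (snd \<omega> v) x n) \<in> measurable (golf_measure a b p) (count_space UNIV)" by fact
    fix i
    show "(\<lambda>\<omega>. walk_step a' b' (snd \<omega> v n) i) \<in> measurable (golf_measure a b p) (count_space UNIV)"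
      by (rule mcc[where g="\<lambda>\<omega>. snd \<omega> v n" and f="\<lambda>c \<omega>. walk_step a' b' c i"]) (auto intro: meas_W)
  qed
  then show ?case by simp
qed

lemma meas_walk_pred[measurable]:
  "(\<lambda>\<omega>. P (walk a' b' (snd \<omega> v) x n)) \<in> measurable (golf_measure a b p) (count_space UNIV)"
  using measurable_compose[OF meas_walk, of "\<lambda>i. P i" "count_space UNIV"] by simp

lemma fold_None: "fold (stepF a b W) L None = None"
  by (induction L) (auto simp: stepF_def)

lemma meas_fold:
  "(\<lambda>\<omega>. fold (stepF a' b' (snd \<omega>)) L (Some \<eta>)) \<in> measurable (golf_measure a b p) (count_space UNIV)"
proof (induction L arbitrary: \<eta>)
  case Nil then show ?case by simp
next
  case (Cons v L)
  let ?E = "\<lambda>\<omega>. \<exists>n. \<eta> (walk a' b' (snd \<omega> v) v n) = -1"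
  let ?H = "\<lambda>\<omega>. walk a' b' (snd \<omega> v) v (LEAST n. \<eta> (walk a' b' (snd \<omega> v) v n) = -1)"
  have eq: "fold (stepF a' b' (snd \<omega>)) (v # L) (Some \<eta>) =
    (if ?E \<omega> then fold (stepF a' b' (snd \<omega>)) L (Some (\<eta>(v:=0, ?H \<omega> := 0))) else None)" for \<omega>
    by (simp add: stepF_def ball_move_def Let_def fold_None[unfolded stepF_def])
  have H: "?H \<in> measurable (golf_measure a b p) (count_space UNIV)"
  proof (rule mcc[where g="\<lambda>\<omega>. LEAST n. \<eta> (walk a' b' (snd \<omega> v) v n) = -1" and f="\<lambda>i \<omega>. walk a' b' (snd \<omega> v) v i"])
    show "(\<lambda>\<omega>. LEAST n. \<eta> (walk a' b' (snd \<omega> v) v n) = -1) \<in> measurable (golf_measure a b p) (count_space UNIV)"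
      by (rule measurable_Least) (rule meas_walk_pred)
  qed (rule meas_walk)
  have E: "{\<omega> \<in> space (golf_measure a b p). ?E \<omega>} \<in> sets (golf_measure a b p)"
    by measurable
  have F: "(\<lambda>\<omega>. fold (stepF a' b' (snd \<omega>)) L (Some (\<eta>(v:=0, ?H \<omega> := 0)))) \<in> measurable (golf_measure a b p) (count_space UNIV)"
    by (rule mcc[OF H, where f="\<lambda>i \<omega>. fold (stepF a' b' (snd \<omega>)) L (Some (\<eta>(v:=0, i := 0)))"]) (rule Cons.IH)
  show ?case unfolding eq
    by (rule measurable_If[OF F _ E]) simp
qed



lemma insort_key_cong:
  fixes C C' :: "int \<Rightarrow> real"
  shows "(\<forall>y\<in>set ys. (C x \<le> C y) = (C' x \<le> C' y)) \<Longrightarrow> insort_key C x ys = insort_key C' x ys"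
  by (induction ys) auto

lemma sort_key_cong:
  fixes C C' :: "int \<Rightarrow> real"
  shows "(\<forall>x\<in>set xs. \<forall>y\<in>set xs. (C x \<le> C y) = (C' x \<le> C' y)) \<Longrightarrow> sort_key C xs = sort_key C' xs"
proof (induction xs)
  case Nil then show ?case by simp
next
  case (Cons x xs)
  then have IH: "sort_key C xs = sort_key C' xs" by simp
  have "insort_key C x (sort_key C' xs) = insort_key C' x (sort_key C' xs)"
    by (rule insort_key_cong) (use Cons.prems in simp)
  then show ?case using IH by simp
qed

lemma Phi_eq:
  fixes C :: "int \<Rightarrow> real"
  assumes "X \<subseteq> B \<times> B" "Y \<subseteq> B"
  shows "(({(u,v). u \<in> B \<and> v \<in> B \<and> C u \<le> C v}, {v\<in>B. C v \<le> t}) = (X,Y)) \<longleftrightarrow>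
    ((\<forall>u\<in>B. \<forall>v\<in>B. (C u \<le> C v) = ((u,v) \<in> X)) \<and> (\<forall>v\<in>B. (C v \<le> t) = (v \<in> Y)))"
proof -
  have 1: "{(u,v). u \<in> B \<and> v \<in> B \<and> C u \<le> C v} = X \<longleftrightarrow> (\<forall>u\<in>B. \<forall>v\<in>B. (C u \<le> C v) = ((u,v) \<in> X))"
    using assms(1) by (auto simp: set_eq_iff subset_iff)
  have 2: "{v\<in>B. C v \<le> t} = Y \<longleftrightarrow> (\<forall>v\<in>B. (C v \<le> t) = (v \<in> Y))"
    using assms(2) by (auto simp: set_eq_iff subset_iff)
  show ?thesis using 1 2 by simp
qed
lemma sets_Phi:
  fixes B :: "int set"
  shows "{\<omega> \<in> space (golf_measure a b p). (\<forall>u\<in>B. \<forall>v\<in>B. (fst \<omega> u \<le> fst \<omega> v) = ((u,v) \<in> X)) \<and> (\<forall>v\<in>B. (fst \<omega> v \<le> t) = (v \<in> Y))} \<in> sets (golf_measure a b p)"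
proof -
  have P1: "Measurable.pred (golf_measure a b p) (\<lambda>\<omega>. (fst \<omega> u \<le> fst \<omega> v) = ((u,v) \<in> X))" for u v
  proof (cases "(u,v) \<in> X")
    case True
    then have eq: "(\<lambda>\<omega>. (fst \<omega> u \<le> fst \<omega> v) = ((u,v) \<in> X)) = (\<lambda>\<omega>. fst \<omega> u \<le> fst \<omega> v)" by simp
    show ?thesis unfolding eq pred_def by (rule borel_measurable_le) (rule meas_C)+
  next
    case False
    then have eq: "(\<lambda>\<omega>. (fst \<omega> u \<le> fst \<omega> v) = ((u,v) \<in> X)) = (\<lambda>\<omega>. \<not> fst \<omega> u \<le> fst \<omega> v)" by simp
    have "Measurable.pred (golf_measure a b p) (\<lambda>\<omega>. fst \<omega> u \<le> fst \<omega> v)"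
      unfolding pred_def by (rule borel_measurable_le) (rule meas_C)+
    then show ?thesis unfolding eq by (rule pred_intros_logic(2))
  qed
  have P2: "Measurable.pred (golf_measure a b p) (\<lambda>\<omega>. (fst \<omega> v \<le> t) = (v \<in> Y))" for v by measurable
  have "Measurable.pred (golf_measure a b p) (\<lambda>\<omega>. (\<forall>u\<in>B. \<forall>v\<in>B. (fst \<omega> u \<le> fst \<omega> v) = ((u,v) \<in> X)) \<and> (\<forall>v\<in>B. (fst \<omega> v \<le> t) = (v \<in> Y)))"
    by (intro pred_intros_logic pred_intros_countable_bounded P1 P2)
  then show ?thesis by (simp add: pred_def)
qed
lemma dep_meas:
  fixes h :: "(int \<Rightarrow> real) \<Rightarrow> 'b"
  assumes finB: "finite B"
    and dep: "\<And>C C'. (\<forall>u\<in>B. \<forall>v\<in>B. (C u \<le> C v) = (C' u \<le> C' v)) \<Longrightarrow> (\<forall>v\<in>B. (C v \<le> t) = (C' v \<le> t)) \<Longrightarrow> h C = h C'"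
  shows "(\<lambda>\<omega>. h (fst \<omega>)) \<in> measurable (golf_measure a b p) (count_space UNIV)"
proof -
  define \<Phi> where "\<Phi> = (\<lambda>C::int \<Rightarrow> real. ({(u,v). u \<in> B \<and> v \<in> B \<and> C u \<le> C v}, {v\<in>B. C v \<le> t}))"
  define I where "I = Pow (B \<times> B) \<times> Pow B"
  define H where "H = (\<lambda>z. h (SOME C. \<Phi> C = z))"
  have hH: "h C = H (\<Phi> C)" for C
  proof -
    have "\<Phi> (SOME C'. \<Phi> C' = \<Phi> C) = \<Phi> C" using someI[of "\<lambda>C'. \<Phi> C' = \<Phi> C" C] by simp
    then have "h (SOME C'. \<Phi> C' = \<Phi> C) = h C"
      by (intro dep) (auto simp: \<Phi>_def set_eq_iff)
    then show ?thesis unfolding H_def by simp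
  qed
  have cI: "countable I" unfolding I_def using finB by (intro countable_finite) simp
  have g: "(\<lambda>\<omega>. \<Phi> (fst \<omega>)) \<in> measurable (golf_measure a b p) (count_space I)"
    unfolding measurable_count_space_eq_countable[OF cI]
  proof (intro conjI ballI)
    show "(\<lambda>\<omega>. \<Phi> (fst \<omega>)) \<in> space (golf_measure a b p) \<rightarrow> I" unfolding I_def \<Phi>_def by auto
    fix z assume z: "z \<in> I"
    obtain X Y where XY: "z = (X, Y)" "X \<subseteq> B \<times> B" "Y \<subseteq> B" using z unfolding I_def by auto
    have "(\<lambda>\<omega>. \<Phi> (fst \<omega>)) -` {z} \<inter> space (golf_measure a b p) =
      {\<omega> \<in> space (golf_measure a b p). (\<forall>u\<in>B. \<forall>v\<in>B. (fst \<omega> u \<le> fst \<omega> v) = ((u,v) \<in> X)) \<and> (\<forall>v\<in>B. (fst \<omega> v \<le> t) = (v \<in> Y))}"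
    proof -
      have "\<Phi> (fst \<omega>) = z \<longleftrightarrow> (\<forall>u\<in>B. \<forall>v\<in>B. (fst \<omega> u \<le> fst \<omega> v) = ((u,v) \<in> X)) \<and> (\<forall>v\<in>B. (fst \<omega> v \<le> t) = (v \<in> Y))" for \<omega>
        unfolding \<Phi>_def XY(1) by (rule Phi_eq[OF XY(2,3)])
      then show ?thesis by blast
    qed
    also have "\<dots> \<in> sets (golf_measure a b p)"
      by (rule sets_Phi)
    finally show "(\<lambda>\<omega>. \<Phi> (fst \<omega>)) -` {z} \<inter> space (golf_measure a b p) \<in> sets (golf_measure a b p)" .
  qed
  have "(\<lambda>\<omega>. H (\<Phi> (fst \<omega>))) \<in> measurable (golf_measure a b p) (count_space UNIV)"
    by (rule measurable_compose_countable'[OF _ g cI, where f="\<lambda>z \<omega>. H z"]) simp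
  then show ?thesis unfolding hH[symmetric] .
qed

lemma meas_golf:
  "(\<lambda>\<omega>. golf_restricted \<eta>0 a b \<omega> t) \<in> measurable (golf_measure a b p) (count_space UNIV)"
proof -
  let ?B = "{v \<in> {a..b}. \<eta>0 v = 1}"
  have finB: "finite ?B" by (rule finite_subset[of _ "{a..b}"]) auto
  let ?L = "\<lambda>C. sort_key C (sorted_list_of_set {v \<in> ?B. C v \<le> t})"
  have eq: "golf_restricted \<eta>0 a b \<omega> t = (if inj_on (fst \<omega>) ?B then
     fold (stepF a b (snd \<omega>)) (?L (fst \<omega>)) (Some (\<lambda>i. if i \<in> {a..b} then \<eta>0 i else 0)) else None)" for \<omega>
    unfolding golf_Gf Gf_def by (rule refl)
  have L: "(\<lambda>\<omega>. ?L (fst \<omega>)) \<in> measurable (golf_measure a b p) (count_space UNIV)"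
  proof (rule dep_meas[OF finB])
    fix C C' :: "int \<Rightarrow> real"
    assume r: "\<forall>u\<in>?B. \<forall>v\<in>?B. (C u \<le> C v) = (C' u \<le> C' v)" and s: "\<forall>v\<in>?B. (C v \<le> t) = (C' v \<le> t)"
    have S: "{v \<in> ?B. C v \<le> t} = {v \<in> ?B. C' v \<le> t}" using s by auto
    have finS: "finite {v \<in> ?B. C' v \<le> t}" by (rule finite_subset[of _ "{a..b}"]) auto
    have setxs: "set (sorted_list_of_set {v \<in> ?B. C' v \<le> t}) = {v \<in> ?B. C' v \<le> t}" using finS by simp
    have "\<forall>x\<in>set (sorted_list_of_set {v \<in> ?B. C' v \<le> t}). \<forall>y\<in>set (sorted_list_of_set {v \<in> ?B. C' v \<le> t}). (C x \<le> C y) = (C' x \<le> C' y)"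
      unfolding setxs using r by blast
    then show "?L C = ?L C'" unfolding S by (rule sort_key_cong)
  qed
  have I: "(\<lambda>\<omega>. inj_on (fst \<omega>) ?B) \<in> measurable (golf_measure a b p) (count_space UNIV)"
  proof (rule dep_meas[OF finB])
    fix C C' :: "int \<Rightarrow> real"
    assume r: "\<forall>u\<in>?B. \<forall>v\<in>?B. (C u \<le> C v) = (C' u \<le> C' v)"
    have e: "(C u = C v) = (C' u = C' v)" if "u \<in> ?B" "v \<in> ?B" for u v
    proof -
      have "(C u \<le> C v) = (C' u \<le> C' v)" "(C v \<le> C u) = (C' v \<le> C' u)" using r that by blast+
      then show ?thesis by (simp add: order.eq_iff)
    qed
    show "inj_on C ?B = inj_on C' ?B" unfolding inj_on_def using e by blast
  qed
  have F: "(\<lambda>\<omega>. fold (stepF a b (snd \<omega>)) (?L (fst \<omega>)) (Some (\<lambda>i. if i \<in> {a..b} then \<eta>0 i else 0)))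
     \<in> measurable (golf_measure a b p) (count_space UNIV)"
    by (rule mcc[OF L, where f="\<lambda>l \<omega>. fold (stepF a b (snd \<omega>)) l (Some (\<lambda>i. if i \<in> {a..b} then \<eta>0 i else 0))"])
       (rule meas_fold)
  have E: "{\<omega> \<in> space (golf_measure a b p). inj_on (fst \<omega>) ?B} \<in> sets (golf_measure a b p)"
    using I by (simp add: Measurable.pred_def)
  show ?thesis unfolding eq
    by (rule measurable_If[OF F _ E]) simp
qed

lemma meas_golf_i:
  "(\<lambda>\<omega>. map_option (\<lambda>\<eta>. \<eta> i) (golf_restricted \<eta>0 a b \<omega> t)) \<in> measurable (golf_measure a b p) (count_space UNIV)"
  using measurable_compose[OF meas_golf, of "\<lambda>x. map_option (\<lambda>\<eta>. \<eta> i) x" "count_space UNIV"] by simp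



abbreviation "U \<equiv> uniform_measure lborel {0..1::real}"

lemma prob_U: "prob_space U"
  by (rule prob_space_uniform_measure) auto

lemma U_single: "emeasure U {x} = 0"
proof -
  have "emeasure lborel ({0..1} \<inter> {x}) \<le> emeasure lborel {x}" by (rule emeasure_mono) auto
  then have "emeasure lborel ({0..1} \<inter> {x}) = 0" by simp
  then show ?thesis by (subst emeasure_uniform_measure) auto
qed

lemma distr_pair_U:
  assumes uv: "u \<noteq> v" "u \<in> I" "v \<in> I" and fin: "finite I"
  shows "distr (PiM I (\<lambda>_. U)) (U \<Otimes>\<^sub>M U) (\<lambda>C. (C u, C v)) = U \<Otimes>\<^sub>M U"
proof -
  interpret U: prob_space U by (rule prob_U)
  interpret P: product_sigma_finite "\<lambda>_. U" by standard
  have sU: "space U = UNIV" by simp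
  show ?thesis
  proof (rule pair_measure_eqI[symmetric])
    show "sigma_finite_measure U" by standard
    show "sigma_finite_measure U" by standard
    show "sets (U \<Otimes>\<^sub>M U) = sets (distr (PiM I (\<lambda>_. U)) (U \<Otimes>\<^sub>M U) (\<lambda>C. (C u, C v)))" by simp
    fix A B assume A: "A \<in> sets U" and B: "B \<in> sets U"
    have meas: "(\<lambda>C. (C u, C v)) \<in> measurable (PiM I (\<lambda>_. U)) (U \<Otimes>\<^sub>M U)"
      using uv by measurable
    have pre: "(\<lambda>C. (C u, C v)) -` (A \<times> B) \<inter> space (PiM I (\<lambda>_. U)) =
      PiE I (\<lambda>i. if i = u then A else if i = v then B else space U)"
      using uv by (auto simp: space_PiM PiE_def Pi_def sU)
    have "emeasure (distr (PiM I (\<lambda>_. U)) (U \<Otimes>\<^sub>M U) (\<lambda>C. (C u, C v))) (A \<times> B)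
        = emeasure (PiM I (\<lambda>_. U)) (PiE I (\<lambda>i. if i = u then A else if i = v then B else space U))"
      using A B by (subst emeasure_distr[OF meas]) (auto simp: pre)
    also have "\<dots> = (\<Prod>i\<in>I. emeasure U (if i = u then A else if i = v then B else space U))"
      using A B fin by (subst P.emeasure_PiM) auto
    also have "\<dots> = emeasure U A * emeasure U B"
    proof -
      have "(\<Prod>i\<in>I. emeasure U (if i = u then A else if i = v then B else space U))
        = emeasure U A * (\<Prod>i\<in>I - {u}. emeasure U (if i = u then A else if i = v then B else space U))"
        using fin uv by (subst prod.remove[of I u]) auto
      also have "(\<Prod>i\<in>I - {u}. emeasure U (if i = u then A else if i = v then B else space U))
        = emeasure U B * (\<Prod>i\<in>I - {u} - {v}. emeasure U (if i = u then A else if i = v then B else space U))"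
        using fin uv by (subst prod.remove[of "I - {u}" v]) auto
      also have "(\<Prod>i\<in>I - {u} - {v}. emeasure U (if i = u then A else if i = v then B else space U)) = 1"
        by (rule prod.neutral) (auto simp: U.emeasure_space_1)
      finally show ?thesis by simp
    qed
    finally show "emeasure U A * emeasure U B = emeasure (distr (PiM I (\<lambda>_. U)) (U \<Otimes>\<^sub>M U) (\<lambda>C. (C u, C v))) (A \<times> B)"
      by simp
  qed
qed

lemma AE_neq_U:
  assumes uv: "u \<noteq> v" "u \<in> I" "v \<in> I" and fin: "finite I"
  shows "AE C in PiM I (\<lambda>_. U). C u \<noteq> C v"
proof -
  interpret U: prob_space U by (rule prob_U)
  interpret UU: pair_sigma_finite U U by standard
  have "AE z in U \<Otimes>\<^sub>M U. fst z \<noteq> snd z"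
  proof (rule UU.AE_pair_measure)
    show "{x \<in> space (U \<Otimes>\<^sub>M U). fst x \<noteq> snd x} \<in> sets (U \<Otimes>\<^sub>M U)" by measurable
    show "AE x in U. AE y in U. fst (x, y) \<noteq> snd (x, y)"
    proof (rule AE_I2)
      fix x
      show "AE y in U. fst (x, y) \<noteq> snd (x, y)"
        by (rule AE_I'[of "{x}"]) (auto simp: U_single)
    qed
  qed
  then have D: "AE z in distr (PiM I (\<lambda>_. U)) (U \<Otimes>\<^sub>M U) (\<lambda>C. (C u, C v)). fst z \<noteq> snd z"
    unfolding distr_pair_U[OF uv fin] .
  have meas: "(\<lambda>C. (C u, C v)) \<in> measurable (PiM I (\<lambda>_. U)) (U \<Otimes>\<^sub>M U)"
    using uv by measurable
  have "AE C in PiM I (\<lambda>_. U). fst (C u, C v) \<noteq> snd (C u, C v)"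
    by (rule AE_distrD[OF meas D])
  then show ?thesis by simp
qed

lemma AE_inj_U:
  assumes fin: "finite I" and B: "B \<subseteq> I"
  shows "AE C in PiM I (\<lambda>_. U). inj_on C B"
proof -
  have finB: "finite B" using fin B by (rule finite_subset[rotated])
  have "AE C in PiM I (\<lambda>_. U). \<forall>u\<in>B. \<forall>v\<in>B. u \<noteq> v \<longrightarrow> C u \<noteq> C v"
  proof (intro AE_finite_allI[OF finB])
    fix u v assume "u \<in> B" "v \<in> B"
    show "AE C in PiM I (\<lambda>_. U). u \<noteq> v \<longrightarrow> C u \<noteq> C v"
    proof (cases "u = v")
      case True then show ?thesis by simp
    next
      case False
      then have "AE C in PiM I (\<lambda>_. U). C u \<noteq> C v" using AE_neq_U[OF False _ _ fin] \<open>u \<in> B\<close> \<open>v \<in> B\<close> B by blast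
      then show ?thesis by (rule AE_mp) simp
    qed
  qed
  then show ?thesis by (rule AE_mp) (auto simp: inj_on_def)
qed



abbreviation "Mb p \<equiv> measure_pmf (bernoulli_pmf p)"
abbreviation "Q p \<equiv> PiM (UNIV :: nat set) (\<lambda>_. Mb p)"

lemma Q_comp[measurable]: "(\<lambda>\<xi>. \<xi> i) \<in> measurable (Q p) (count_space UNIV)"
proof -
  have 2: "(\<lambda>\<xi>. \<xi> i) \<in> measurable (Q p) (Mb p)"
    by (rule measurable_component_singleton) simp
  then show ?thesis using measurable_cong_sets[OF refl sets_measure_pmf_count_space] by blast
qed

lemma AE_run:
  fixes p :: real and c :: bool and N :: nat
  assumes p: "0 \<le> p" "p \<le> 1" and r: "pmf (bernoulli_pmf p) c > 0"
  shows "AE \<xi> in Q p. \<exists>m. \<forall>j<N. \<xi> (m + j) = c"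
proof -
  interpret PS: product_prob_space "\<lambda>_. Mb p" "UNIV :: nat set"
    by unfold_locales
  define r where "r = pmf (bernoulli_pmf p) c"
  have r0: "0 < r" "r \<le> 1" using assms unfolding r_def by (auto simp: pmf_le_1)
  have ind: "PS.P.indep_vars (\<lambda>_. Mb p) (\<lambda>i \<xi>. \<xi> i) UNIV"
  proof -
    have "(\<lambda>x. \<lambda>i\<in>UNIV. x i) = (\<lambda>x::nat \<Rightarrow> bool. x)" by (simp add: restrict_def)
    moreover have "(\<lambda>i. distr (Q p) (Mb p) (\<lambda>\<xi>. \<xi> i)) = (\<lambda>_. Mb p)"
      by (rule ext) (rule PS.PiM_component, simp)
    ultimately have eq: "distr (Q p) (Q p) (\<lambda>x. \<lambda>i\<in>UNIV. x i) = PiM UNIV (\<lambda>i. distr (Q p) (Mb p) (\<lambda>\<xi>. \<xi> i))"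
      by simp
    have rv: "(\<lambda>\<xi>. \<xi> i) \<in> measurable (Q p) (Mb p)" for i by (rule measurable_component_singleton) simp
    have iff: "PS.P.indep_vars (\<lambda>_. Mb p) (\<lambda>i \<xi>. \<xi> i) UNIV \<longleftrightarrow>
      distr (Q p) (PiM UNIV (\<lambda>_. Mb p)) (\<lambda>x. \<lambda>i\<in>UNIV. x i) = PiM UNIV (\<lambda>i. distr (Q p) (Mb p) (\<lambda>\<xi>. \<xi> i))"
      by (rule PS.P.indep_vars_iff_distr_eq_PiM[where M'="\<lambda>_. Mb p" and X="\<lambda>i \<xi>. \<xi> i"]) (use rv in auto)
    show ?thesis using iff eq by simp
  qed
  define K where "K = (\<lambda>k::nat. {k*N..<k*N+N})"
  have disj: "disjoint_family_on K UNIV"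
    unfolding disjoint_family_on_def K_def
  proof (intro ballI impI)
    fix k l :: nat assume "k \<noteq> l"
    then have "k < l \<or> l < k" by auto
    then show "{k * N..<k * N + N} \<inter> {l * N..<l * N + N} = {}"
    proof
      assume "k < l" then have "k * N + N \<le> l * N"
        by (metis Suc_leI add.commute mult_Suc mult_le_mono1)
      then show ?thesis by auto
    next
      assume "l < k" then have "l * N + N \<le> k * N"
        by (metis Suc_leI add.commute mult_Suc mult_le_mono1)
      then show ?thesis by auto
    qed
  qed
  have indK: "PS.P.indep_vars (\<lambda>k. PiM (K k) (\<lambda>_. Mb p)) (\<lambda>k \<xi>. restrict (\<lambda>i. \<xi> i) (K k)) UNIV"
    by (rule PS.P.indep_vars_restrict[OF ind _ disj]) simp
  define A where "A = (\<lambda>k. space (PiM (K k) (\<lambda>_. Mb p)) - PiE (K k) (\<lambda>_. {c}))"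
  have Asets: "A k \<in> sets (PiM (K k) (\<lambda>_. Mb p))" for k
    unfolding A_def by (intro sets.compl_sets sets_PiM_I_finite) (auto simp: K_def)
  have pre: "(\<lambda>\<xi>. restrict (\<lambda>i. \<xi> i) (K k)) -` A k \<inter> space (Q p) =
      space (Q p) - {\<xi> \<in> space (Q p). \<forall>j\<in>K k. \<xi> j \<in> {c}}" for k
  proof -
    have sp: "restrict \<xi> (K k) \<in> space (PiM (K k) (\<lambda>_. Mb p))" for \<xi> :: "nat \<Rightarrow> bool"
      by (simp add: space_PiM)
    have "restrict \<xi> (K k) \<in> A k \<longleftrightarrow> \<not> (\<forall>j\<in>K k. \<xi> j \<in> {c})" for \<xi> :: "nat \<Rightarrow> bool"
      unfolding A_def Diff_iff restrict_PiE_iff using sp[of \<xi>] by (simp only: simp_thms)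
    moreover have "(\<lambda>\<xi>. restrict (\<lambda>i. \<xi> i) (K k)) -` A k \<inter> space (Q p) = {\<xi> \<in> space (Q p). restrict \<xi> (K k) \<in> A k}"
      by blast
    ultimately show ?thesis by blast
  qed
  have box: "PS.P.prob {\<xi> \<in> space (Q p). \<forall>j\<in>K k. \<xi> j \<in> {c}} = r ^ N" for k
  proof -
    have "emeasure (Q p) {\<xi> \<in> space (Q p). \<forall>j\<in>K k. \<xi> j \<in> {c}} = (\<Prod>j\<in>K k. emeasure (Mb p) {c})"
      by (rule PS.emeasure_PiM_Collect) (auto simp: K_def)
    also have "\<dots> = ennreal r ^ N" by (simp add: K_def emeasure_pmf_single r_def)
    finally have "ennreal (PS.P.prob {\<xi> \<in> space (Q p). \<forall>j\<in>K k. \<xi> j \<in> {c}}) = ennreal (r ^ N)"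
      using r0 by (simp add: PS.P.emeasure_eq_measure ennreal_power)
    then show ?thesis using r0 by (subst (asm) ennreal_inj) auto
  qed
  have bsets: "{\<xi> \<in> space (Q p). \<forall>j\<in>K k. \<xi> j \<in> {c}} \<in> sets (Q p)" for k
  proof -
    have pj: "Measurable.pred (Q p) (\<lambda>\<xi>. \<xi> j \<in> {c})" for j
      using measurable_compose[OF Q_comp, of "\<lambda>x. x \<in> {c}" "count_space UNIV"] by simp
    have "Measurable.pred (Q p) (\<lambda>\<xi>. \<forall>j\<in>K k. \<xi> j \<in> {c})" by (intro pred_intros_countable_bounded pj)
    then show ?thesis by (simp add: pred_def)
  qed
  have pk: "PS.P.prob ((\<lambda>\<xi>. restrict (\<lambda>i. \<xi> i) (K k)) -` A k \<inter> space (Q p)) = 1 - r ^ N" for k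
    unfolding pre using PS.P.prob_compl[OF bsets] box by simp
  have bound: "PS.P.prob (\<Inter>k\<in>{..<n}. (\<lambda>\<xi>. restrict (\<lambda>i. \<xi> i) (K k)) -` A k \<inter> space (Q p)) = (1 - r ^ N) ^ n"
    if "n > 0" for n
  proof -
    have "PS.P.prob (\<Inter>k\<in>{..<n}. (\<lambda>\<xi>. restrict (\<lambda>i. \<xi> i) (K k)) -` A k \<inter> space (Q p))
      = (\<Prod>k\<in>{..<n}. PS.P.prob ((\<lambda>\<xi>. restrict (\<lambda>i. \<xi> i) (K k)) -` A k \<inter> space (Q p)))"
      by (rule PS.P.indep_varsD[OF indK]) (use that Asets in auto)
    also have "\<dots> = (1 - r ^ N) ^ n" using pk by simp
    finally show ?thesis .
  qed
  define bad where "bad = {\<xi> \<in> space (Q p). \<not> (\<exists>m. \<forall>j<N. \<xi> (m + j) = c)}"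
  have bad_sets: "bad \<in> sets (Q p)" unfolding bad_def by measurable
  have bad_sub: "bad \<subseteq> (\<Inter>k\<in>{..<n}. (\<lambda>\<xi>. restrict (\<lambda>i. \<xi> i) (K k)) -` A k \<inter> space (Q p))" for n
  proof
    fix \<xi> assume "\<xi> \<in> bad"
    then have sp: "\<xi> \<in> space (Q p)" and nr: "\<And>m. \<not> (\<forall>j<N. \<xi> (m + j) = c)" unfolding bad_def by auto
    have "\<xi> \<in> (\<lambda>\<xi>. restrict (\<lambda>i. \<xi> i) (K k)) -` A k \<inter> space (Q p)" for k
    proof -
      obtain j where j: "j < N" "\<xi> (k * N + j) \<noteq> c" using nr[of "k * N"] by auto
      have "k * N + j \<in> K k" using j unfolding K_def by auto
      then have "\<not> (\<forall>j\<in>K k. \<xi> j \<in> {c})" using j by auto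
      then show ?thesis unfolding pre using sp by auto
    qed
    then show "\<xi> \<in> (\<Inter>k\<in>{..<n}. (\<lambda>\<xi>. restrict (\<lambda>i. \<xi> i) (K k)) -` A k \<inter> space (Q p))" by auto
  qed
  have le: "PS.P.prob bad \<le> (1 - r ^ N) ^ n" if "n > 0" for n
  proof -
    have "PS.P.prob bad \<le> PS.P.prob (\<Inter>k\<in>{..<n}. (\<lambda>\<xi>. restrict (\<lambda>i. \<xi> i) (K k)) -` A k \<inter> space (Q p))"
      by (rule PS.P.finite_measure_mono[OF bad_sub]) (use Asets indK that in \<open>auto simp: PS.P.indep_vars_def intro!: sets.finite_INT measurable_sets\<close>)
    then show ?thesis using bound[OF that] by simp
  qed
  have rN: "0 < r ^ N" "r ^ N \<le> 1" using r0 by (auto simp: power_le_one)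
  have lim: "(\<lambda>n. (1 - r ^ N) ^ n) \<longlonglongrightarrow> 0"
    by (rule LIMSEQ_power_zero) (use rN in auto)
  have "PS.P.prob bad \<le> 0"
    by (rule LIMSEQ_le_const[OF lim]) (use le in \<open>auto intro!: exI[of _ 1]\<close>)
  then have "PS.P.prob bad = 0" using measure_nonneg[of "Q p" bad] by linarith
  then have "emeasure (Q p) bad = 0" by (simp add: PS.P.emeasure_eq_measure)
  then show ?thesis
    by (subst AE_iff_measurable[OF bad_sets]) (auto simp: bad_def)
qed



lemma distr_pair_snd':
  assumes "prob_space M1" "sigma_finite_measure M2"
  shows "distr (M1 \<Otimes>\<^sub>M M2) M2 snd = M2"
proof (intro measure_eqI)
  interpret M1: prob_space M1 by fact
  interpret M2: sigma_finite_measure M2 by fact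
  fix A assume A: "A \<in> sets (distr (M1 \<Otimes>\<^sub>M M2) M2 snd)"
  from A have "emeasure (distr (M1 \<Otimes>\<^sub>M M2) M2 snd) A = emeasure (M1 \<Otimes>\<^sub>M M2) (space M1 \<times> A)"
    by (auto simp add: emeasure_distr space_pair_measure dest: sets.sets_into_space intro!: arg_cong2[where f=emeasure])
  with A show "emeasure (distr (M1 \<Otimes>\<^sub>M M2) M2 snd) A = emeasure M2 A"
    by (simp add: M2.emeasure_pair_measure_Times M1.emeasure_space_1)
qed simp

theorem mainTheorem18:
  fixes \<eta>0 :: "int \<Rightarrow> int" and s1 s2 :: int and p :: real
  assumes "\<forall>i. \<eta>0 i \<in> {-1, 0, 1}"
    and "0 \<le> p" and "p \<le> 1"
    and "separator \<eta>0 s1" and "separator \<eta>0 s2" and "s1 < s2"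
    and "\<forall>v. s1 < v \<and> v < s2 \<longrightarrow> \<not> separator \<eta>0 v"
  shows "golf_valid \<eta>0 s1 s2 p
    \<and> (AE \<omega> in golf_measure s1 s2 p.
         \<exists>\<eta>. golf_restricted \<eta>0 s1 s2 \<omega> 1 = Some \<eta> \<and> \<eta> s1 = -1 \<and> \<eta> s2 = -1)"
proof -
  note vals = assms(1) and p = assms(2,3) and sep1 = assms(4) and sep2 = assms(5) and ab = assms(6)
  let ?B = "{v \<in> {s1..s2}. \<eta>0 v = 1}"
  let ?M1 = "PiM {s1..s2} (\<lambda>_. U)"
  let ?M2 = "PiM {s1..s2} (\<lambda>_. Q p)"
  have M: "golf_measure s1 s2 p = ?M1 \<Otimes>\<^sub>M ?M2" unfolding golf_measure_def by simp
  have pQ: "prob_space (Q p)" by (rule prob_space_PiM) (rule prob_space_measure_pmf)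
  have pM1: "prob_space ?M1" by (rule prob_space_PiM) (rule prob_U)
  have pM2: "prob_space ?M2" by (rule prob_space_PiM) (rule pQ)
  interpret M2: prob_space ?M2 by (rule pM2)
  interpret M1: prob_space ?M1 by (rule pM1)
  define c where "c = (0 < p)"
  have r: "pmf (bernoulli_pmf p) c > 0"
  proof (cases "0 < p")
    case True then show ?thesis using p unfolding c_def by simp
  next
    case False then have "p = 0" using p by simp
    then show ?thesis unfolding c_def by simp
  qed
  have AE1: "AE \<omega> in golf_measure s1 s2 p. inj_on (fst \<omega>) ?B"
  proof -
    have "AE C in ?M1. inj_on C ?B" by (rule AE_inj_U) auto
    then have "AE C in distr (?M1 \<Otimes>\<^sub>M ?M2) ?M1 fst. inj_on C ?B" unfolding M2.distr_pair_fst[of ?M1] .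
    then show ?thesis unfolding M by (rule AE_distrD[OF measurable_fst])
  qed
  have AE2: "AE \<omega> in golf_measure s1 s2 p. \<forall>v\<in>?B. goodW s1 s2 c (snd \<omega> v)"
  proof -
    have "AE W in ?M2. \<forall>v\<in>?B. goodW s1 s2 c (W v)"
    proof (rule AE_finite_allI)
      show "finite ?B" by (rule finite_subset[of _ "{s1..s2}"]) auto
      fix v assume v: "v \<in> ?B"
      have "AE \<xi> in Q p. goodW s1 s2 c \<xi>"
        unfolding goodW_def by (rule AE_run[OF p r])
      then show "AE W in ?M2. goodW s1 s2 c (W v)"
        by (rule AE_PiM_component[rotated 2]) (use pQ v in auto)
    qed
    then have "AE W in distr (?M1 \<Otimes>\<^sub>M ?M2) ?M2 snd. \<forall>v\<in>?B. goodW s1 s2 c (W v)"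
      unfolding distr_pair_snd'[OF pM1 M2.sigma_finite_measure_axioms] .
    then show ?thesis unfolding M by (rule AE_distrD[OF measurable_snd])
  qed
  have good: "AE \<omega> in golf_measure s1 s2 p. \<forall>t. \<exists>y. golf_restricted \<eta>0 s1 s2 \<omega> t = Some y \<and> Inv s1 s2 y"
    using AE1 AE2 by eventually_elim (use good_golf[OF vals sep1 sep2 ab] in blast)
  have v1: "AE \<omega> in golf_measure s1 s2 p. \<forall>t\<in>{0..1}. golf_restricted \<eta>0 s1 s2 \<omega> t \<noteq> None"
    using good by eventually_elim auto
  have v2: "\<forall>t\<in>{0..1}. \<forall>i\<in>{s1..s2}.
        (\<lambda>\<omega>. map_option (\<lambda>\<eta>. \<eta> i) (golf_restricted \<eta>0 s1 s2 \<omega> t))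
          \<in> measurable (golf_measure s1 s2 p) (count_space UNIV)"
    using meas_golf_i by blast
  have v3: "AE \<omega> in golf_measure s1 s2 p. cadlag_discrete (golf_restricted \<eta>0 s1 s2 \<omega>)"
    by (rule AE_I2) (rule golf_cadlag)
  have fin: "AE \<omega> in golf_measure s1 s2 p.
         \<exists>\<eta>. golf_restricted \<eta>0 s1 s2 \<omega> 1 = Some \<eta> \<and> \<eta> s1 = -1 \<and> \<eta> s2 = -1"
    using good by eventually_elim (auto simp: Inv_def)
  show ?thesis unfolding golf_valid_def using v1 v2 v3 fin by blast
qed

end
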